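(* Consider the variation of the temporal graph discovery game in which the Discoverer does not learn the static edge set (only the node set). Let $n,T_{\max}\in\mathbb N^+$, $k\in[n]$, $m\in[\binom n2-n]$ and $\delta\in[T_{\max}]$. Then there is an Adversary such that any algorithm winning this game variation on graphs with $n$ nodes and $m$ edges must take at least $\lfloor nT_{\max}/(2\delta k)\rfloor$ rounds. Moreover, this Adversary picks a graph with at most two $\delta$-edge connected components.
   Context: A temporal graph $\mathcal G=(V,E,\lambda)$ with lifetime $T_{\max}$ consists of a finite undirected static graph $(V,E)$ and a labeling $\lambda:E\to\{1,\dots,T_{\max}\}$; edge $e$ is present only at time $\lambda(e)$. $[x]=\{1,\dots,x\}$. Infection model with parameter $\delta$: a set $S\subseteq V\times[0,T_{\max}]$ of at most $k$ seed infections is given; a seed $(u,t)$ makes $u$ infected at time $t$; otherwise a susceptible node $u$ becomes infected at time $t$ iff some neighbour $v$ infectious at time $t$ has $\lambda(uv)=t$ (exactly one infector recorded if several exist). A node infected at time $t$ is infectious at times $t+1,\dots,t+\delta$ and resistant afterwards. The infection log records triples $(u,v,t)$ ($u$ infected $v$ at time $t$). Game (unknown static graph variant): the Discoverer knows only $V$; each round it submits at most $k$ seeds and the Adversary answers with an infection log consistent with the seeds under some temporal graph on $V$ consistent with all previous answers (adaptive). The Discoverer wins iff the temporal graph (edges and labels) it finally submits equals the Adversary's final temporal graph consistent with all logs. $\delta$-edge connected components: relate two edges sharing an endpoint whose labels differ by at most $\delta$; the classes of the transitive closure are the $\delta$-edge connected components. *)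

theory Defs
  imports Main
begin

text \<open>Nodes are 0..<n. A temporal graph is a partial map from 2-element node sets
  (the static edges) to their time labels; its domain is the static edge set.\<close>
type_synonym tgraph = "nat set \<Rightarrow> nat option"

definition wf_tgraph :: "nat \<Rightarrow> nat \<Rightarrow> tgraph \<Rightarrow> bool" where
  "wf_tgraph n Tmax G \<longleftrightarrow>
     (\<forall>e \<in> dom G. \<exists>u v. e = {u, v} \<and> u \<noteq> v \<and> u < n \<and> v < n) \<and>
     (\<forall>t \<in> ran G. 1 \<le> t \<and> t \<le> Tmax)"

definition delta_rel :: "nat \<Rightarrow> tgraph \<Rightarrow> (nat set \<times> nat set) set" where
  "delta_rel \<delta> G = {(e, f). e \<in> dom G \<and> f \<in> dom G \<and> e \<inter> f \<noteq> {} \<and>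
      the (G e) \<le> the (G f) + \<delta> \<and> the (G f) \<le> the (G e) + \<delta>}"

definition delta_components :: "nat \<Rightarrow> tgraph \<Rightarrow> nat set set set" where
  "delta_components \<delta> G = dom G // ((delta_rel \<delta> G)\<^sup>*)"

text \<open>Infection process. it v = Some t means v gets infected at time t.\<close>
definition infectious :: "nat \<Rightarrow> (nat \<Rightarrow> nat option) \<Rightarrow> nat \<Rightarrow> nat \<Rightarrow> bool" where
  "infectious \<delta> it u s \<longleftrightarrow> (\<exists>t. it u = Some t \<and> t < s \<and> s \<le> t + \<delta>)"

definition infection_cause ::
  "nat \<Rightarrow> tgraph \<Rightarrow> (nat \<times> nat) set \<Rightarrow> (nat \<Rightarrow> nat option) \<Rightarrow> nat \<Rightarrow> nat \<Rightarrow> bool" where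
  "infection_cause \<delta> G S it v s \<longleftrightarrow>
     (v, s) \<in> S \<or> (\<exists>u. G {u, v} = Some s \<and> infectious \<delta> it u s)"

text \<open>L is a valid infection log of G for seed set S (triples (u,v,t): u infected v at t).\<close>
definition is_log ::
  "nat \<Rightarrow> tgraph \<Rightarrow> (nat \<times> nat) set \<Rightarrow> (nat \<times> nat \<times> nat) set \<Rightarrow> bool" where
  "is_log \<delta> G S L \<longleftrightarrow> (\<exists>it.
     (\<forall>v t. it v = Some t \<longleftrightarrow>
        (infection_cause \<delta> G S it v t \<and> (\<forall>s<t. \<not> infection_cause \<delta> G S it v s))) \<and>
     (\<forall>v. it v = None \<longrightarrow> (\<forall>s. \<not> infection_cause \<delta> G S it v s)) \<and>
     (\<forall>(u, v, t) \<in> L. it v = Some t \<and> (v, t) \<notin> S \<and> G {u, v} = Some t \<and> infectious \<delta> it u t) \<and>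
     (\<forall>v t. it v = Some t \<and> (v, t) \<notin> S \<longrightarrow> (\<exists>u. (u, v, t) \<in> L)) \<and>
     (\<forall>u v t u' t'. (u, v, t) \<in> L \<and> (u', v, t') \<in> L \<longrightarrow> u = u' \<and> t = t'))"

definition valid_seeds :: "nat \<Rightarrow> nat \<Rightarrow> nat \<Rightarrow> (nat \<times> nat) set \<Rightarrow> bool" where
  "valid_seeds n Tmax k S \<longleftrightarrow> finite S \<and> card S \<le> k \<and> S \<subseteq> {0..<n} \<times> {0..Tmax}"

text \<open>Adversary: maps the list of all seed sets submitted so far (the last one being the
  current query) to the log it answers.  G is consistent with all answers to qs.\<close>
definition consistent_with ::
  "nat \<Rightarrow> ((nat \<times> nat) set list \<Rightarrow> (nat \<times> nat \<times> nat) set) \<Rightarrow> (nat \<times> nat) set list \<Rightarrow> tgraph \<Rightarrow> bool" where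
  "consistent_with \<delta> adv qs G \<longleftrightarrow>
     (\<forall>i < length qs. is_log \<delta> G (qs ! i) (adv (take (Suc i) qs)))"

definition in_class :: "nat \<Rightarrow> nat \<Rightarrow> nat \<Rightarrow> nat \<Rightarrow> tgraph \<Rightarrow> bool" where
  "in_class n m Tmax \<delta> G \<longleftrightarrow> wf_tgraph n Tmax G \<and> card (dom G) = m \<and>
     card (delta_components \<delta> G) \<le> 2"

end

theory Submission
  imports Defs
begin


fun stage :: "nat \<Rightarrow> tgraph \<Rightarrow> (nat \<times> nat) set \<Rightarrow> nat \<Rightarrow> (nat \<Rightarrow> nat option)" where
  "stage \<delta> G S 0 = (\<lambda>v. if infection_cause \<delta> G S (\<lambda>_. None) v 0 then Some 0 else None)"
| "stage \<delta> G S (Suc t) = (\<lambda>v. case stage \<delta> G S t v of Some r \<Rightarrow> Some r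
     | None \<Rightarrow> if infection_cause \<delta> G S (stage \<delta> G S t) v (Suc t) then Some (Suc t) else None)"

lemma stage_le: "stage \<delta> G S t v = Some r \<Longrightarrow> r \<le> t \<and> stage \<delta> G S r v = Some r"
proof (induction t arbitrary: r)
  case 0 then show ?case by (auto split: if_splits)
next
  case (Suc t)
  show ?case
  proof (cases "stage \<delta> G S t v")
    case None then show ?thesis using Suc.prems by (auto split: if_splits)
  next
    case (Some a) then show ?thesis using Suc by auto
  qed
qed

lemma stage_mono: "stage \<delta> G S t v = Some r \<Longrightarrow> t \<le> t' \<Longrightarrow> stage \<delta> G S t' v = Some r"
  by (induction t') (auto simp: le_Suc_eq split: option.splits if_splits)

definition itf :: "nat \<Rightarrow> tgraph \<Rightarrow> (nat \<times> nat) set \<Rightarrow> nat \<Rightarrow> nat option" where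
  "itf \<delta> G S v = (if \<exists>t. stage \<delta> G S t v = Some t then Some (LEAST t. stage \<delta> G S t v = Some t) else None)"

lemma stage_uniq: "stage \<delta> G S t v = Some t \<Longrightarrow> stage \<delta> G S r v = Some r \<Longrightarrow> t = r"
  by (metis nat_le_linear option.inject stage_mono)

lemma itf_iff: "itf \<delta> G S v = Some r \<longleftrightarrow> stage \<delta> G S r v = Some r"
proof
  assume "itf \<delta> G S v = Some r"
  then show "stage \<delta> G S r v = Some r" unfolding itf_def
    by (metis (mono_tags, lifting) LeastI option.distinct(1) option.inject)
next
  assume h: "stage \<delta> G S r v = Some r"
  then have "(LEAST t. stage \<delta> G S t v = Some t) = r"
    by (intro Least_equality) (auto dest: stage_uniq)
  then show "itf \<delta> G S v = Some r" using h unfolding itf_def by auto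
qed

lemma infectious_itf: "infectious \<delta> (itf \<delta> G S) u (Suc t) \<longleftrightarrow> infectious \<delta> (stage \<delta> G S t) u (Suc t)"
  unfolding infectious_def itf_iff
  by (metis less_Suc_eq_le stage_le stage_mono)

lemma cause_itf_0: "infection_cause \<delta> G S (itf \<delta> G S) v 0 \<longleftrightarrow> infection_cause \<delta> G S (\<lambda>_. None) v 0"
  unfolding infection_cause_def infectious_def by auto

lemma cause_itf_Suc: "infection_cause \<delta> G S (itf \<delta> G S) v (Suc t) \<longleftrightarrow> infection_cause \<delta> G S (stage \<delta> G S t) v (Suc t)"
  unfolding infection_cause_def using infectious_itf by blast

lemma stage_char:
  "(stage \<delta> G S t v = None \<longleftrightarrow> (\<forall>s\<le>t. \<not> infection_cause \<delta> G S (itf \<delta> G S) v s)) \<and>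
   (stage \<delta> G S t v = Some t \<longleftrightarrow> infection_cause \<delta> G S (itf \<delta> G S) v t \<and> (\<forall>s<t. \<not> infection_cause \<delta> G S (itf \<delta> G S) v s))"
proof (induction t)
  case 0 then show ?case using cause_itf_0 by auto
next
  case (Suc t)
  have A: "stage \<delta> G S (Suc t) v = None \<longleftrightarrow> stage \<delta> G S t v = None \<and> \<not> infection_cause \<delta> G S (itf \<delta> G S) v (Suc t)"
    using cause_itf_Suc by (auto split: option.splits)
  have B: "stage \<delta> G S (Suc t) v = Some (Suc t) \<longleftrightarrow> stage \<delta> G S t v = None \<and> infection_cause \<delta> G S (itf \<delta> G S) v (Suc t)"
    using cause_itf_Suc stage_le[of \<delta> G S t v] by (auto split: option.splits)
  show ?case unfolding A B using Suc.IH by (auto simp: le_Suc_eq less_Suc_eq_le)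
qed

lemma log_exists: "\<exists>L. is_log \<delta> G S L"
proof -
  define it where "it = itf \<delta> G S"
  define C where "C = infection_cause \<delta> G S it"
  have fix1: "it v = Some t \<longleftrightarrow> C v t \<and> (\<forall>s<t. \<not> C v s)" for v t
    unfolding it_def C_def itf_iff by (rule conjunct2[OF stage_char])
  have fix2: "it v = None \<Longrightarrow> \<not> C v s" for v s
  proof -
    assume "it v = None"
    have "\<forall>t. stage \<delta> G S t v = None"
    proof
      fix t
      show "stage \<delta> G S t v = None"
      proof (cases "stage \<delta> G S t v")
        case (Some r)
        then have "stage \<delta> G S r v = Some r" using stage_le by blast
        then have "it v = Some r" unfolding it_def using itf_iff by blast
        then show ?thesis using \<open>it v = None\<close> by simp
      qed
    qed
    then have "stage \<delta> G S s v = None" by blast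
    then have "\<forall>s'\<le>s. \<not> infection_cause \<delta> G S (itf \<delta> G S) v s'"
      using conjunct1[OF stage_char[of \<delta> G S s v]] by blast
    then show "\<not> C v s" unfolding C_def it_def by blast
  qed
  define inf where "inf v t = (SOME u. G {u, v} = Some t \<and> infectious \<delta> it u t)" for v t
  define L where "L = {(u, v, t). it v = Some t \<and> (v, t) \<notin> S \<and> u = inf v t}"
  have inf: "it v = Some t \<Longrightarrow> (v, t) \<notin> S \<Longrightarrow> G {inf v t, v} = Some t \<and> infectious \<delta> it (inf v t) t" for v t
  proof -
    assume a: "it v = Some t" "(v, t) \<notin> S"
    have "C v t" using fix1 a(1) by blast
    then have "(v, t) \<in> S \<or> (\<exists>u. G {u, v} = Some t \<and> infectious \<delta> it u t)"
      unfolding C_def infection_cause_def .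
    then have "\<exists>u. G {u, v} = Some t \<and> infectious \<delta> it u t" using a(2) by blast
    then show ?thesis unfolding inf_def by (rule someI_ex)
  qed
  have c1: "\<forall>v t. it v = Some t \<longleftrightarrow> (C v t \<and> (\<forall>s<t. \<not> C v s))" using fix1 by blast
  have c2: "\<forall>v. it v = None \<longrightarrow> (\<forall>s. \<not> C v s)" using fix2 by blast
  have c3: "\<forall>(u, v, t) \<in> L. it v = Some t \<and> (v, t) \<notin> S \<and> G {u, v} = Some t \<and> infectious \<delta> it u t"
    unfolding L_def using inf by blast
  have c4: "\<forall>v t. it v = Some t \<and> (v, t) \<notin> S \<longrightarrow> (\<exists>u. (u, v, t) \<in> L)"
    unfolding L_def by blast
  have c5: "\<forall>u v t u' t'. (u, v, t) \<in> L \<and> (u', v, t') \<in> L \<longrightarrow> u = u' \<and> t = t'"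
    unfolding L_def by auto
  have "is_log \<delta> G S L"
    unfolding is_log_def
    apply (rule exI[of _ it])
    using c1 c2 c3 c4 c5 unfolding C_def by blast
  then show ?thesis by blast
qed



lemma hidden_log:
  assumes L: "is_log \<delta> GD S L"
    and allT: "\<And>e t. GD e = Some t \<Longrightarrow> t = T"
    and pn: "p \<notin> dom GD" and sT: "s \<le> T"
    and unk: "\<And>a r. (a, r) \<in> S \<Longrightarrow> a \<in> p \<Longrightarrow> \<not> (r < s \<and> s \<le> r + \<delta>)"
  shows "is_log \<delta> (GD(p \<mapsto> s)) S L"
proof -
  obtain it where it1: "\<forall>v t. it v = Some t \<longleftrightarrow>
        (infection_cause \<delta> GD S it v t \<and> (\<forall>s<t. \<not> infection_cause \<delta> GD S it v s))"
    and it2: "\<forall>v. it v = None \<longrightarrow> (\<forall>s. \<not> infection_cause \<delta> GD S it v s)"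
    and it3: "\<forall>(u, v, t) \<in> L. it v = Some t \<and> (v, t) \<notin> S \<and> GD {u, v} = Some t \<and> infectious \<delta> it u t"
    and it4: "\<forall>v t. it v = Some t \<and> (v, t) \<notin> S \<longrightarrow> (\<exists>u. (u, v, t) \<in> L)"
    and it5: "\<forall>u v t u' t'. (u, v, t) \<in> L \<and> (u', v, t') \<in> L \<longrightarrow> u = u' \<and> t = t'"
    using L unfolding is_log_def by blast
  let ?G = "GD(p \<mapsto> s)"
  have ninf: "\<not> infectious \<delta> it u s" if "u \<in> p" for u
  proof
    assume "infectious \<delta> it u s"
    then obtain r where r: "it u = Some r" "r < s" "s \<le> r + \<delta>" unfolding infectious_def by blast
    then have "infection_cause \<delta> GD S it u r" using it1 by blast
    then have "(u, r) \<in> S \<or> (\<exists>w. GD {w, u} = Some r)" unfolding infection_cause_def by blast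
    then show False
    proof
      assume "(u, r) \<in> S" then show False using unk that r by blast
    next
      assume "\<exists>w. GD {w, u} = Some r"
      then have "r = T" using allT by blast
      then show False using r sT by simp
    qed
  qed
  have ceq: "infection_cause \<delta> ?G S it v t \<longleftrightarrow> infection_cause \<delta> GD S it v t" for v t
  proof
    assume "infection_cause \<delta> ?G S it v t"
    then have "(v, t) \<in> S \<or> (\<exists>u. ?G {u, v} = Some t \<and> infectious \<delta> it u t)"
      unfolding infection_cause_def .
    then show "infection_cause \<delta> GD S it v t"
    proof
      assume "\<exists>u. ?G {u, v} = Some t \<and> infectious \<delta> it u t"
      then obtain u where u: "?G {u, v} = Some t" "infectious \<delta> it u t" by blast
      show ?thesis
      proof (cases "{u, v} = p")
        case True
        then have "t = s" using u by simp
        then show ?thesis using u ninf True by blast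
      next
        case False
        then show ?thesis using u unfolding infection_cause_def by auto
      qed
    qed (simp add: infection_cause_def)
  next
    assume "infection_cause \<delta> GD S it v t"
    then have "(v, t) \<in> S \<or> (\<exists>u. GD {u, v} = Some t \<and> infectious \<delta> it u t)"
      unfolding infection_cause_def .
    then show "infection_cause \<delta> ?G S it v t"
    proof
      assume "\<exists>u. GD {u, v} = Some t \<and> infectious \<delta> it u t"
      then obtain u where u: "GD {u, v} = Some t" "infectious \<delta> it u t" by blast
      then have "{u, v} \<noteq> p" using pn by auto
      then show ?thesis using u unfolding infection_cause_def by auto
    qed (simp add: infection_cause_def)
  qed
  have j3: "\<forall>(u, v, t) \<in> L. it v = Some t \<and> (v, t) \<notin> S \<and> ?G {u, v} = Some t \<and> infectious \<delta> it u t"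
  proof (intro ballI, clarify)
    fix u v t assume "(u, v, t) \<in> L"
    then have h: "it v = Some t \<and> (v, t) \<notin> S \<and> GD {u, v} = Some t \<and> infectious \<delta> it u t" using it3 by blast
    then have "{u, v} \<noteq> p" using pn by auto
    then show "it v = Some t \<and> (v, t) \<notin> S \<and> ?G {u, v} = Some t \<and> infectious \<delta> it u t" using h by simp
  qed
  show ?thesis unfolding is_log_def
    apply (rule exI[of _ it])
    using it1 it2 j3 it4 it5 unfolding ceq by blast
qed

definition resp :: "nat \<Rightarrow> tgraph \<Rightarrow> tgraph set \<Rightarrow> (nat \<times> nat) set \<Rightarrow> (nat \<times> nat \<times> nat) set" where
  "resp \<delta> GD C S = (if \<exists>G\<in>C. is_log \<delta> G S (SOME L. is_log \<delta> GD S L) then (SOME L. is_log \<delta> GD S L)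
     else (SOME L. \<exists>G\<in>C. is_log \<delta> G S L))"

primrec cands :: "nat \<Rightarrow> tgraph set \<Rightarrow> tgraph \<Rightarrow> (nat \<times> nat) set list \<Rightarrow> tgraph set" where
  "cands \<delta> C0 GD [] = C0"
| "cands \<delta> C0 GD (S # r) = {G \<in> cands \<delta> C0 GD r. is_log \<delta> G S (resp \<delta> GD (cands \<delta> C0 GD r) S)}"

definition advf :: "nat \<Rightarrow> tgraph set \<Rightarrow> tgraph \<Rightarrow> (nat \<times> nat) set list \<Rightarrow> (nat \<times> nat \<times> nat) set" where
  "advf \<delta> C0 GD qs = resp \<delta> GD (cands \<delta> C0 GD (tl (rev qs))) (hd (rev qs))"

lemma cands_iff: "G \<in> cands \<delta> C0 GD (rev qs) \<longleftrightarrow> G \<in> C0 \<and> consistent_with \<delta> (advf \<delta> C0 GD) qs G"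
proof (induction qs rule: rev_induct)
  case Nil then show ?case by (simp add: consistent_with_def)
next
  case (snoc S qs)
  have "consistent_with \<delta> (advf \<delta> C0 GD) (qs @ [S]) G \<longleftrightarrow>
        consistent_with \<delta> (advf \<delta> C0 GD) qs G \<and> is_log \<delta> G S (advf \<delta> C0 GD (qs @ [S]))"
    unfolding consistent_with_def
    by (auto simp: nth_append less_Suc_eq)
  moreover have "advf \<delta> C0 GD (qs @ [S]) = resp \<delta> GD (cands \<delta> C0 GD (rev qs)) S"
    unfolding advf_def by simp
  ultimately show ?case using snoc.IH by auto
qed

lemma cands_nonempty: "C0 \<noteq> {} \<Longrightarrow> cands \<delta> C0 GD r \<noteq> {}"
proof (induction r)
  case Nil then show ?case by simp
next
  case (Cons S r)
  let ?C = "cands \<delta> C0 GD r"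
  obtain G where G: "G \<in> ?C" using Cons by auto
  show ?case
  proof (cases "\<exists>G\<in>?C. is_log \<delta> G S (SOME L. is_log \<delta> GD S L)")
    case True then show ?thesis by (auto simp: resp_def)
  next
    case False
    have "\<exists>L. \<exists>G\<in>?C. is_log \<delta> G S L" using G log_exists by blast
    then have "\<exists>G\<in>?C. is_log \<delta> G S (SOME L. \<exists>G\<in>?C. is_log \<delta> G S L)" by (rule someI_ex)
    then show ?thesis using False by (auto simp: resp_def)
  qed
qed

lemma cands_hidden:
  assumes "G \<in> C0" and "\<And>S. S \<in> set r \<Longrightarrow> is_log \<delta> G S (SOME L. is_log \<delta> GD S L)"
  shows "G \<in> cands \<delta> C0 GD r"
  using assms
proof (induction r)
  case Nil then show ?case by simp
next
  case (Cons S r)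
  then have "G \<in> cands \<delta> C0 GD r" by simp
  moreover have "is_log \<delta> G S (SOME L. is_log \<delta> GD S L)" using Cons.prems by simp
  ultimately show ?case by (auto simp: resp_def)
qed



definition cyc :: "nat \<Rightarrow> nat \<Rightarrow> nat set" where "cyc n i = {i, Suc i mod n}"
definition Cyc :: "nat \<Rightarrow> nat set set" where "Cyc n = cyc n ` {..<n}"
definition AP :: "nat \<Rightarrow> nat set set" where "AP n = {A. A \<subseteq> {..<n} \<and> card A = 2}"
definition NC :: "nat \<Rightarrow> nat set set" where "NC n = AP n - Cyc n"
definition adj :: "(nat set \<times> nat set) set" where "adj = {(e, f). e \<inter> f \<noteq> {}}"

lemma cyc_inj: "n \<ge> 3 \<Longrightarrow> inj_on (cyc n) {..<n}"
proof (rule inj_onI)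
  fix i j assume n: "n \<ge> 3" and i: "i \<in> {..<n}" and j: "j \<in> {..<n}" and e: "cyc n i = cyc n j"
  have si: "Suc i mod n = (if Suc i = n then 0 else Suc i)" using i by auto
  have sj: "Suc j mod n = (if Suc j = n then 0 else Suc j)" using j by auto
  from e have "{i, Suc i mod n} = {j, Suc j mod n}" unfolding cyc_def .
  then have "(i = j \<and> Suc i mod n = Suc j mod n) \<or> (i = Suc j mod n \<and> Suc i mod n = j)"
    by (metis doubleton_eq_iff)
  then show "i = j" using si sj n i j by (auto split: if_splits)
qed

lemma card_Cyc: "n \<ge> 3 \<Longrightarrow> card (Cyc n) = n"
  unfolding Cyc_def using cyc_inj card_image by fastforce

lemma cyc_AP: "n \<ge> 2 \<Longrightarrow> i < n \<Longrightarrow> cyc n i \<in> AP n"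
proof -
  assume n: "n \<ge> 2" and i: "i < n"
  have "i \<noteq> Suc i mod n" using n i by (cases "Suc i = n") auto
  moreover have "Suc i mod n < n" using n by simp
  ultimately show ?thesis unfolding AP_def cyc_def using i by auto
qed

lemma Cyc_sub: "n \<ge> 2 \<Longrightarrow> Cyc n \<subseteq> AP n"
  unfolding Cyc_def using cyc_AP by auto

lemma card_AP: "card (AP n) = n choose 2"
  unfolding AP_def using n_subsets[of "{..<n}" 2] by simp

lemma finite_AP: "finite (AP n)"
  unfolding AP_def by (rule finite_subset[of _ "Pow {..<n}"]) auto

lemma card_NC: "n \<ge> 3 \<Longrightarrow> card (NC n) = (n choose 2) - n"
  unfolding NC_def using card_Diff_subset[OF finite_subset[OF Cyc_sub[of n] finite_AP] Cyc_sub[of n]] card_AP card_Cyc[of n]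
  by simp

lemma mem_AP: "i \<noteq> j \<Longrightarrow> i < n \<Longrightarrow> j < n \<Longrightarrow> {i, j} \<in> AP n"
  unfolding AP_def by auto

lemma mem_Cyc: "i < j \<Longrightarrow> j < n \<Longrightarrow> n \<ge> 3 \<Longrightarrow> ({i, j} \<in> Cyc n \<longleftrightarrow> j = Suc i \<or> (i = 0 \<and> j = n - 1))"
proof
  assume ij: "i < j" "j < n" "n \<ge> 3"
  assume "{i, j} \<in> Cyc n"
  then obtain l where l: "l < n" "{i, j} = {l, Suc l mod n}" unfolding Cyc_def cyc_def by auto
  have sl: "Suc l mod n = (if Suc l = n then 0 else Suc l)" using l by auto
  from l(2) have "(i = l \<and> j = Suc l mod n) \<or> (i = Suc l mod n \<and> j = l)" by (metis doubleton_eq_iff)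
  then show "j = Suc i \<or> (i = 0 \<and> j = n - 1)" using sl ij l(1) by (auto split: if_splits)
next
  assume ij: "i < j" "j < n" "n \<ge> 3"
  assume "j = Suc i \<or> (i = 0 \<and> j = n - 1)"
  then show "{i, j} \<in> Cyc n"
  proof
    assume "j = Suc i"
    then have "{i, j} = cyc n i" unfolding cyc_def using ij by auto
    then show ?thesis unfolding Cyc_def using ij by auto
  next
    assume "i = 0 \<and> j = n - 1"
    then have "{i, j} = cyc n (n - 1)" unfolding cyc_def using ij by auto
    then show ?thesis unfolding Cyc_def using ij by auto
  qed
qed

lemma mem_NC: "i < j \<Longrightarrow> j < n \<Longrightarrow> n \<ge> 3 \<Longrightarrow> ({i, j} \<in> NC n \<longleftrightarrow> j \<noteq> Suc i \<and> \<not> (i = 0 \<and> j = n - 1))"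
  unfolding NC_def using mem_Cyc mem_AP by auto

lemma NC_pair: "e \<in> NC n \<Longrightarrow> \<exists>i j. e = {i, j} \<and> i < j \<and> j < n"
proof -
  assume "e \<in> NC n"
  then have "e \<subseteq> {..<n}" "card e = 2" unfolding NC_def AP_def by auto
  then obtain x y where "e = {x, y}" "x \<noteq> y" "x < n" "y < n" by (auto simp: card_2_iff)
  then show ?thesis
    by (metis insert_commute linorder_neqE_nat)
qed

lemma NC_conn:
  assumes n: "n \<ge> 5" and e: "e \<in> NC n"
  shows "(e, {0, 2}) \<in> (adj \<inter> NC n \<times> NC n)\<^sup>*"
proof -
  let ?R = "adj \<inter> NC n \<times> NC n"
  obtain i j where ij: "e = {i, j}" "i < j" "j < n" using NC_pair[OF e] by blast
  have ejs: "j \<noteq> Suc i" "\<not> (i = 0 \<and> j = n - 1)" using mem_NC[of i j n] ij e n by auto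
  have e02: "{0, 2} \<in> NC n" using mem_NC[of 0 2 n] n by auto
  have step: "(a, b) \<in> ?R" if "a \<in> NC n" "b \<in> NC n" "a \<inter> b \<noteq> {}" for a b
    using that unfolding adj_def by auto
  show ?thesis
  proof (cases "i = 0")
    case True
    then have "(e, {0,2}) \<in> ?R" using step e e02 ij by auto
    then show ?thesis by auto
  next
    case False
    show ?thesis
    proof (cases "i = 1")
      case i1: True
      show ?thesis
      proof (cases "j \<le> n - 2")
        case True
        have f: "{0, j} \<in> NC n" using mem_NC[of 0 j n] n ij ejs i1 True by auto
        have "(e, {0, j}) \<in> ?R" using step e f ij by auto
        moreover have "({0, j}, {0,2}) \<in> ?R" using step f e02 by auto
        ultimately show ?thesis by (meson converse_rtrancl_into_rtrancl r_into_rtrancl)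
      next
        case False
        have f1: "{1, 3} \<in> NC n" using mem_NC[of 1 3 n] n by auto
        have f2: "{0, 3} \<in> NC n" using mem_NC[of 0 3 n] n by auto
        have "(e, {1, 3}) \<in> ?R" using step e f1 ij i1 by auto
        moreover have "({1, 3}, {0, 3}) \<in> ?R" using step f1 f2 by auto
        moreover have "({0, 3}, {0,2}) \<in> ?R" using step f2 e02 by auto
        ultimately show ?thesis by (meson converse_rtrancl_into_rtrancl r_into_rtrancl)
      qed
    next
      case False
      have f: "{0, i} \<in> NC n" using mem_NC[of 0 i n] n ij ejs \<open>i \<noteq> 0\<close> False by auto
      have "(e, {0, i}) \<in> ?R" using step e f ij by auto
      moreover have "({0, i}, {0,2}) \<in> ?R" using step f e02 by auto
      ultimately show ?thesis by (meson converse_rtrancl_into_rtrancl r_into_rtrancl)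
    qed
  qed
qed

lemma rtrancl_cross:
  "(a, b) \<in> r\<^sup>* \<Longrightarrow> a \<notin> F \<Longrightarrow> b \<in> F \<Longrightarrow> \<exists>x y. (x, y) \<in> r \<and> x \<notin> F \<and> y \<in> F"
proof (induction rule: converse_rtrancl_induct)
  case base then show ?case by simp
next
  case (step a a')
  then show ?case by (cases "a' \<in> F") auto
qed

lemma conn_subsets:
  fixes E :: "'a set" and A :: "('a \<times> 'a) set"
  assumes fin: "finite E" and e0: "e0 \<in> E" and conn: "\<forall>e\<in>E. (e, e0) \<in> (A \<inter> E \<times> E)\<^sup>*"
  shows "1 \<le> j \<Longrightarrow> j \<le> card E \<Longrightarrow> \<exists>F\<subseteq>E. card F = j \<and> e0 \<in> F \<and> (\<forall>e\<in>F. (e, e0) \<in> (A \<inter> F \<times> F)\<^sup>*)"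
proof (induction j)
  case 0 then show ?case by simp
next
  case (Suc j)
  show ?case
  proof (cases "j = 0")
    case True
    then show ?thesis using e0 by (intro exI[of _ "{e0}"]) auto
  next
    case False
    then obtain F where F: "F \<subseteq> E" "card F = j" "e0 \<in> F" "\<forall>e\<in>F. (e, e0) \<in> (A \<inter> F \<times> F)\<^sup>*"
      using Suc by auto
    have "F \<noteq> E" using F(2) Suc.prems by auto
    then obtain e' where e': "e' \<in> E" "e' \<notin> F" using F(1) by blast
    then obtain x y where xy: "(x, y) \<in> A \<inter> E \<times> E" "x \<notin> F" "y \<in> F"
      using rtrancl_cross[of e' e0 "A \<inter> E \<times> E" F] conn F(3) by blast
    let ?F = "insert x F"
    have finF: "finite F" using F(1) fin finite_subset by blast
    have mono: "(A \<inter> F \<times> F)\<^sup>* \<subseteq> (A \<inter> ?F \<times> ?F)\<^sup>*" by (rule rtrancl_mono) auto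
    have "\<forall>e\<in>?F. (e, e0) \<in> (A \<inter> ?F \<times> ?F)\<^sup>*"
    proof
      fix e assume "e \<in> ?F"
      then show "(e, e0) \<in> (A \<inter> ?F \<times> ?F)\<^sup>*"
      proof
        assume "e = x"
        have "(x, y) \<in> A \<inter> ?F \<times> ?F" using xy by auto
        moreover have "(y, e0) \<in> (A \<inter> ?F \<times> ?F)\<^sup>*" using F(4) xy(3) mono by blast
        ultimately show ?thesis using \<open>e = x\<close> by (meson converse_rtrancl_into_rtrancl)
      next
        assume "e \<in> F" then show ?thesis using F(4) mono by blast
      qed
    qed
    moreover have "card ?F = Suc j" using finF xy(2) F(2) by simp
    moreover have "?F \<subseteq> E" using F(1) xy(1) by auto
    ultimately show ?thesis using F(3) by blast
  qed
qed

lemma exists_D: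
  assumes n: "n \<ge> 4" and m: "m \<le> card (NC n)" and m4: "n = 4 \<Longrightarrow> m \<le> 1"
  shows "\<exists>D\<subseteq>NC n. card D = m \<and> (\<exists>e0. \<forall>e\<in>D. (e, e0) \<in> (adj \<inter> D \<times> D)\<^sup>*)"
proof (cases "m \<le> 1")
  case True
  have e02: "{0, 2} \<in> NC n" using mem_NC[of 0 2 n] n by auto
  show ?thesis
  proof (cases "m = 0")
    case True then show ?thesis by (intro exI[of _ "{}"]) auto
  next
    case False
    then have "m = 1" using \<open>m \<le> 1\<close> by simp
    then show ?thesis using e02 by (intro exI[of _ "{{0,2}}"]) auto
  qed
next
  case False
  then have n5: "n \<ge> 5" using n m4 by (cases "n = 4") auto
  have e02: "{0, 2} \<in> NC n" using mem_NC[of 0 2 n] n by auto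
  have fin: "finite (NC n)" unfolding NC_def using finite_AP by auto
  obtain F where "F \<subseteq> NC n" "card F = m" "{0,2} \<in> F" "\<forall>e\<in>F. (e, {0,2}) \<in> (adj \<inter> F \<times> F)\<^sup>*"
    using conn_subsets[OF fin e02, of adj m] NC_conn[OF n5] False m by auto
  then show ?thesis by blast
qed

lemma cyc_nbr: "n \<ge> 1 \<Longrightarrow> i < n \<Longrightarrow> a \<in> cyc n i \<Longrightarrow> cyc n i \<in> {cyc n a, cyc n ((a + n - 1) mod n)}"
proof -
  assume n: "n \<ge> 1" and i: "i < n" and a: "a \<in> cyc n i"
  have si: "Suc i mod n = (if Suc i = n then 0 else Suc i)" using i by auto
  from a have "a = i \<or> a = Suc i mod n" unfolding cyc_def by auto
  then show ?thesis
  proof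
    assume "a = Suc i mod n"
    then have "(a + n - 1) mod n = i" using si i by (auto split: if_splits)
    then show ?thesis by simp
  qed simp
qed



lemma AP_pair: "e \<in> AP n \<Longrightarrow> \<exists>u v. e = {u, v} \<and> u \<noteq> v \<and> u < n \<and> v < n"
proof -
  assume "e \<in> AP n"
  then have "e \<subseteq> {..<n}" "card e = 2" unfolding AP_def by auto
  then show ?thesis by (auto simp: card_2_iff)
qed

lemma rtrancl_sym_Image: "sym R \<Longrightarrow> (x, y) \<in> R\<^sup>* \<Longrightarrow> R\<^sup>* `` {x} = R\<^sup>* `` {y}"
proof -
  assume s: "sym R" and xy: "(x, y) \<in> R\<^sup>*"
  then have yx: "(y, x) \<in> R\<^sup>*" using sym_rtrancl[OF s] unfolding sym_def by blast
  show ?thesis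
  proof
    show "R\<^sup>* `` {x} \<subseteq> R\<^sup>* `` {y}" using yx by (auto intro: rtrancl_trans)
    show "R\<^sup>* `` {y} \<subseteq> R\<^sup>* `` {x}" using xy by (auto intro: rtrancl_trans)
  qed
qed

lemma sym_delta_rel: "sym (delta_rel \<delta> G)"
  unfolding sym_def delta_rel_def by auto

lemma in_class_hidden:
  assumes n: "n \<ge> 4" and D: "D \<subseteq> NC n" "card D = m - 1" and m: "m \<ge> 1"
    and e0: "\<forall>e\<in>D. (e, e0) \<in> (adj \<inter> D \<times> D)\<^sup>*"
    and p: "p \<in> Cyc n" and s: "1 \<le> s" "s \<le> Tmax"
  shows "in_class n m Tmax \<delta> ((\<lambda>e. if e \<in> D then Some Tmax else None)(p \<mapsto> s))"
proof -
  let ?GD = "\<lambda>e. if e \<in> D then Some Tmax else None"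
  let ?G = "?GD(p \<mapsto> s)"
  have pD: "p \<notin> D" using D p unfolding NC_def by auto
  have domG: "dom ?G = insert p D" by (auto simp: dom_def)
  have finD: "finite D" using D(1) finite_AP unfolding NC_def by (auto intro: finite_subset)
  have pAP: "p \<in> AP n" using p Cyc_sub[of n] n by auto
  have wf: "wf_tgraph n Tmax ?G"
    unfolding wf_tgraph_def
  proof
    show "\<forall>e\<in>dom ?G. \<exists>u v. e = {u, v} \<and> u \<noteq> v \<and> u < n \<and> v < n"
      using domG AP_pair pAP D(1) unfolding NC_def by auto
    show "\<forall>t\<in>ran ?G. 1 \<le> t \<and> t \<le> Tmax"
      using s by (auto simp: ran_def split: if_splits)
  qed
  have cardG: "card (dom ?G) = m" using domG finD pD D(2) m by simp
  let ?R = "delta_rel \<delta> ?G"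
  have sub: "adj \<inter> D \<times> D \<subseteq> ?R"
  proof
    fix x assume "x \<in> adj \<inter> D \<times> D"
    then obtain a b where ab: "x = (a, b)" "a \<in> D" "b \<in> D" "a \<inter> b \<noteq> {}" unfolding adj_def by auto
    then have "a \<noteq> p" "b \<noteq> p" using pD by auto
    then show "x \<in> ?R" using ab unfolding delta_rel_def by (auto simp: dom_def)
  qed
  have cls: "?R\<^sup>* `` {x} \<in> {?R\<^sup>* `` {e0}, ?R\<^sup>* `` {p}}" if "x \<in> dom ?G" for x
  proof (cases "x = p")
    case True then show ?thesis by simp
  next
    case False
    then have "x \<in> D" using that domG by auto
    then have "(x, e0) \<in> ?R\<^sup>*" using e0 rtrancl_mono[OF sub] by blast
    then show ?thesis using rtrancl_sym_Image[OF sym_delta_rel] by auto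
  qed
  have "delta_components \<delta> ?G \<subseteq> {?R\<^sup>* `` {e0}, ?R\<^sup>* `` {p}}"
    unfolding delta_components_def quotient_def using cls by auto
  then have "card (delta_components \<delta> ?G) \<le> card {?R\<^sup>* `` {e0}, ?R\<^sup>* `` {p}}"
    by (rule card_mono[rotated]) simp
  also have "\<dots> \<le> 2" by (simp add: card_insert_if)
  finally show ?thesis unfolding in_class_def using wf cardG by simp
qed



lemma two_elems: "finite A \<Longrightarrow> card A \<ge> 2 \<Longrightarrow> \<exists>x y. x \<in> A \<and> y \<in> A \<and> x \<noteq> y"
  by (metis card_2_iff' card_le_Suc_iff numeral_2_eq_2 insert_iff)

theorem mainTheorem13:
  fixes n Tmax k m \<delta> :: nat
  assumes "n \<ge> 1" and "Tmax \<ge> 1"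
    and "1 \<le> k" and "k \<le> n"
    and "1 \<le> m" and "int m \<le> int (n choose 2) - int n"
    and "1 \<le> \<delta>" and "\<delta> \<le> Tmax"
  shows "\<exists>adv :: (nat \<times> nat) set list \<Rightarrow> (nat \<times> nat \<times> nat) set.
     (\<forall>qs. (\<forall>S \<in> set qs. valid_seeds n Tmax k S) \<longrightarrow>
        (\<exists>G. in_class n m Tmax \<delta> G \<and> consistent_with \<delta> adv qs G)) \<and>
     (\<forall>qs. (\<forall>S \<in> set qs. valid_seeds n Tmax k S) \<longrightarrow>
        length qs < n * Tmax div (2 * \<delta> * k) \<longrightarrow>
        (\<exists>G1 G2. G1 \<noteq> G2 \<and> in_class n m Tmax \<delta> G1 \<and> in_class n m Tmax \<delta> G2 \<and>
           consistent_with \<delta> adv qs G1 \<and> consistent_with \<delta> adv qs G2))"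
proof -
  have n4: "n \<ge> 4"
  proof (rule ccontr)
    assume "\<not> n \<ge> 4"
    then have "n = 1 \<or> n = 2 \<or> n = 3" using assms(1) by auto
    then have "n choose 2 \<le> n" by (auto simp: choose_two)
    then show False using assms(5,6) by linarith
  qed
  have m4: "n = 4 \<Longrightarrow> m - 1 \<le> 1"
  proof -
    assume "n = 4"
    then have "n choose 2 = 6" by (simp add: choose_two)
    then show ?thesis using assms(6) \<open>n = 4\<close> by simp
  qed
  have cNC: "m - 1 \<le> card (NC n)" using card_NC[of n] n4 assms(6) by simp
  obtain D e0 where D: "D \<subseteq> NC n" "card D = m - 1" and e0: "\<forall>e\<in>D. (e, e0) \<in> (adj \<inter> D \<times> D)\<^sup>*"
    using exists_D[OF n4 cNC m4] by blast
  define GD where "GD = (\<lambda>e. if e \<in> D then Some Tmax else None)"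
  define Opt where "Opt = Cyc n \<times> {1..Tmax}"
  define C0 where "C0 = {G. in_class n m Tmax \<delta> G}"
  have pD: "p \<in> Cyc n \<Longrightarrow> p \<notin> D" for p using D unfolding NC_def by auto
  have inO: "(p, s) \<in> Opt \<Longrightarrow> GD(p \<mapsto> s) \<in> C0" for p s
    unfolding Opt_def C0_def GD_def using in_class_hidden[OF n4 D assms(5) e0] by auto
  have O0: "(cyc n 0, 1) \<in> Opt" unfolding Opt_def Cyc_def using n4 assms(2) by auto
  have C0ne: "C0 \<noteq> {}" using inO[OF O0] by blast
  let ?adv = "advf \<delta> C0 GD"
  have part1: "\<forall>qs. (\<forall>S \<in> set qs. valid_seeds n Tmax k S) \<longrightarrow>
        (\<exists>G. in_class n m Tmax \<delta> G \<and> consistent_with \<delta> ?adv qs G)"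
  proof (intro allI impI)
    fix qs
    obtain G where "G \<in> cands \<delta> C0 GD (rev qs)" using cands_nonempty[OF C0ne] by blast
    then show "\<exists>G. in_class n m Tmax \<delta> G \<and> consistent_with \<delta> ?adv qs G"
      using cands_iff unfolding C0_def by blast
  qed
  have part2: "\<forall>qs. (\<forall>S \<in> set qs. valid_seeds n Tmax k S) \<longrightarrow>
        length qs < n * Tmax div (2 * \<delta> * k) \<longrightarrow>
        (\<exists>G1 G2. G1 \<noteq> G2 \<and> in_class n m Tmax \<delta> G1 \<and> in_class n m Tmax \<delta> G2 \<and>
           consistent_with \<delta> ?adv qs G1 \<and> consistent_with \<delta> ?adv qs G2)"
  proof (intro allI impI)
    fix qs
    assume val: "\<forall>S \<in> set qs. valid_seeds n Tmax k S"
      and len: "length qs < n * Tmax div (2 * \<delta> * k)"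
    define Seeds where "Seeds = \<Union> (set qs)"
    define K where "K x = {ob \<in> Opt. fst x \<in> fst ob \<and> snd x < snd ob \<and> snd ob \<le> snd x + \<delta>}" for x :: "nat \<times> nat"
    define Kill where "Kill = (\<Union>x\<in>Seeds. K x)"
    have finS: "finite Seeds" using val unfolding Seeds_def valid_seeds_def by auto
    have cSeeds: "card Seeds \<le> length qs * k"
    proof -
      have "card Seeds \<le> sum card (set qs)" unfolding Seeds_def by (rule card_Union_le_sum_card)
      also have "\<dots> \<le> card (set qs) * k"
        using sum_bounded_above[of "set qs" card k] val unfolding valid_seeds_def by auto
      also have "\<dots> \<le> length qs * k" by (simp add: card_length)
      finally show ?thesis .
    qed
    have cK: "card (K x) \<le> 2 * \<delta>" for x
    proof -
      obtain a r where x: "x = (a, r)" by fastforce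
      have "K x \<subseteq> {cyc n a, cyc n ((a + n - 1) mod n)} \<times> {Suc r..r + \<delta>}"
      proof
        fix ob assume "ob \<in> K x"
        then obtain p s where ob: "ob = (p, s)" "(p, s) \<in> Opt" "a \<in> p" "r < s" "s \<le> r + \<delta>"
          unfolding K_def x by (cases ob) auto
        then obtain i where i: "i < n" "p = cyc n i" unfolding Opt_def Cyc_def by auto
        then have "p \<in> {cyc n a, cyc n ((a + n - 1) mod n)}" using cyc_nbr[of n i a] ob(3) assms(1) by auto
        then show "ob \<in> {cyc n a, cyc n ((a + n - 1) mod n)} \<times> {Suc r..r + \<delta>}" using ob by auto
      qed
      then have "card (K x) \<le> card ({cyc n a, cyc n ((a + n - 1) mod n)} \<times> {Suc r..r + \<delta>})"
        by (rule card_mono[rotated]) simp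
      also have "\<dots> \<le> 2 * \<delta>" by (simp add: card_cartesian_product card_insert_if)
      finally show ?thesis .
    qed
    have cKill: "card Kill \<le> length qs * k * (2 * \<delta>)"
    proof -
      have "card Kill \<le> (\<Sum>x\<in>Seeds. card (K x))" unfolding Kill_def by (rule card_UN_le[OF finS])
      also have "\<dots> \<le> card Seeds * (2 * \<delta>)" using sum_bounded_above[of Seeds "\<lambda>x. card (K x)" "2 * \<delta>"] cK by auto
      also have "\<dots> \<le> length qs * k * (2 * \<delta>)" using cSeeds by simp
      finally show ?thesis .
    qed
    have arith: "length qs * k * (2 * \<delta>) + 2 \<le> n * Tmax"
    proof -
      let ?d = "2 * \<delta> * k"
      have "Suc (length qs) \<le> n * Tmax div ?d" using len by simp
      then have "Suc (length qs) * ?d \<le> (n * Tmax div ?d) * ?d" by (rule mult_right_mono) simp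
      also have "\<dots> \<le> n * Tmax" by simp
      finally have h1: "length qs * ?d + ?d \<le> n * Tmax" by simp
      have "1 * 1 \<le> \<delta> * k" using assms(3,7) by (rule mult_le_mono[rotated])
      then have h2: "?d \<ge> 2" by simp
      have h3: "length qs * k * (2 * \<delta>) = length qs * ?d" by (simp add: algebra_simps)
      show ?thesis using h1 h2 h3 by linarith
    qed
    have cO: "card Opt = n * Tmax" unfolding Opt_def using card_Cyc[of n] n4 by (simp add: card_cartesian_product)
    have finO: "finite Opt" unfolding Opt_def Cyc_def by simp
    have "card Opt - card Kill \<le> card (Opt - Kill)" proof (rule diff_card_le_card_Diff)
      have "Kill \<subseteq> Opt" unfolding Kill_def K_def by auto
      then show "finite Kill" using finO finite_subset by blast
    qed
    then have "card (Opt - Kill) \<ge> 2" using cO cKill arith by linarith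
    then obtain ob1 ob2 where ob12: "ob1 \<in> Opt - Kill" "ob2 \<in> Opt - Kill" "ob1 \<noteq> ob2"
      using two_elems[of "Opt - Kill"] finO by blast
    have good: "GD(fst ob' \<mapsto> snd ob') \<in> cands \<delta> C0 GD (rev qs)" if ob': "ob' \<in> Opt - Kill" for ob'
    proof -
      obtain p s where ps: "ob' = (p, s)" by fastforce
      have pO: "(p, s) \<in> Opt" "(p, s) \<notin> Kill" using ob' ps by auto
      have pc: "p \<in> Cyc n" "1 \<le> s" "s \<le> Tmax" using pO(1) unfolding Opt_def by auto
      have "GD(p \<mapsto> s) \<in> cands \<delta> C0 GD (rev qs)"
      proof (rule cands_hidden)
        show "GD(p \<mapsto> s) \<in> C0" using inO pO(1) by blast
      next
        fix S assume S: "S \<in> set (rev qs)"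
        show "is_log \<delta> (GD(p \<mapsto> s)) S (SOME L. is_log \<delta> GD S L)"
        proof (rule hidden_log)
          show "is_log \<delta> GD S (SOME L. is_log \<delta> GD S L)" using log_exists by (rule someI_ex)
          show "\<And>e t. GD e = Some t \<Longrightarrow> t = Tmax" unfolding GD_def by (auto split: if_splits)
          show "p \<notin> dom GD" using pD[OF pc(1)] unfolding GD_def by (auto simp: dom_def)
          show "s \<le> Tmax" by (rule pc(3))
          show "\<not> (r < s \<and> s \<le> r + \<delta>)" if "(a, r) \<in> S" "a \<in> p" for a r
          proof
            assume "r < s \<and> s \<le> r + \<delta>"
            then have "(p, s) \<in> K (a, r)" unfolding K_def using pO(1) that by auto
            moreover have "(a, r) \<in> Seeds" unfolding Seeds_def using S that by auto
            ultimately show False using pO(2) unfolding Kill_def by blast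
          qed
        qed
      qed
      then show ?thesis using ps by simp
    qed
    define G1 where "G1 = GD(fst ob1 \<mapsto> snd ob1)"
    define G2 where "G2 = GD(fst ob2 \<mapsto> snd ob2)"
    have ne: "G1 \<noteq> G2"
    proof
      assume eq: "G1 = G2"
      have p1: "fst ob1 \<in> Cyc n" using ob12(1) unfolding Opt_def by auto
      show False
      proof (cases "fst ob1 = fst ob2")
        case True
        then have "snd ob1 = snd ob2" using eq unfolding G1_def G2_def by (metis fun_upd_same option.inject)
        then show False using True ob12(3) by (simp add: prod_eq_iff)
      next
        case False
        have "G1 (fst ob1) = Some (snd ob1)" unfolding G1_def by simp
        moreover have "G2 (fst ob1) = None" unfolding G2_def GD_def using False pD[OF p1] by simp
        ultimately show False using eq by simp
      qed
    qed
    have "G1 \<in> cands \<delta> C0 GD (rev qs)" "G2 \<in> cands \<delta> C0 GD (rev qs)"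
      unfolding G1_def G2_def using good ob12 by auto
    then show "\<exists>G1 G2. G1 \<noteq> G2 \<and> in_class n m Tmax \<delta> G1 \<and> in_class n m Tmax \<delta> G2 \<and>
           consistent_with \<delta> ?adv qs G1 \<and> consistent_with \<delta> ?adv qs G2"
      using ne cands_iff unfolding C0_def by blast
  qed
  show ?thesis using part1 part2 by blast
qed

end
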